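(* Consider the delayed bandit setting and Algorithm DEW described in the context, run with learning rate $\eta>0$ and a known bound $d_{\max}$ with $d_{\max}\ge \max_t d_t$. Then, against an oblivious adversary, its expected regret satisfies $$\bar{\mathcal R}_T\le \max\left\{\frac{\ln K}{\eta},\,4e\,d_{\max}\ln K\right\}+\eta\left(\frac{KTe}{2}+D\right),$$ where $D=\sum_{t=1}^T d_t$. In particular, if $T$ and $D$ are known and $\eta=\sqrt{\frac{\ln K}{KTe/2+D}}$ satisfies $\eta\le \frac{1}{4e\,d_{\max}}$, then $$\bar{\mathcal R}_T\le 2\sqrt{\left(\frac{KTe}{2}+D\right)\ln K}.$$
   Context: Setting: fix integers $K\ge 2$, $T\ge 1$, and write $[K]=\{1,\dots,K\}$. An oblivious adversary fixes in advance losses $\ell_t^a\in[0,1]$ for $t=1,2,\dots$, $a\in[K]$, and nonnegative integer delays $d_1,d_2,\dots$. In each round $t$ the learner picks (possibly at random) an action $A_t\in[K]$ and suffers loss $\ell_t^{A_t}$; at the end of round $t$ (after $A_t$ has been chosen) it observes the pairs $(s,\ell_s^{A_s})$ for all $s\le t$ with $s+d_s=t$. The expected regret is $\bar{\mathcal R}_T=\mathbb E\big[\sum_{t=1}^T\ell_t^{A_t}\big]-\min_{a\in[K]}\sum_{t=1}^T\ell_t^a$, the expectation being over the learner's randomization. $D=\sum_{t=1}^T d_t$. Algorithm DEW (delayed exponential weights) with inputs $\eta>0$ and $d_{\max}\ge\max_t d_t$: set $\eta'=\min\{\eta,(4e\,d_{\max})^{-1}\}$ and $w_0^a=1$ for all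 $a$. For $t=1,2,\dots$: let $p_t^a=w_{t-1}^a/\sum_b w_{t-1}^b$; draw $A_t\sim p_t$ and play it; at the end of round $t$, for every $s$ with $s+d_s=t$ form the estimates $\hat\ell_s^a=\ell_s^a\mathbb 1(a=A_s)/p_s^a$ for all $a$; update $w_t^a=w_{t-1}^a\exp\big(-\eta'\sum_{s:\,s+d_s=t}\hat\ell_s^a\big)$. *)

theory Defs
  imports "HOL-Analysis.Analysis"
begin

text \<open>Actions are 1..K, rounds are 1,2,....
  A history is a function A :: nat => nat giving the action played in each round.
  ell t a is the loss of action a in round t, d t is the delay of round t.\<close>

definition dew_eta' :: "real \<Rightarrow> nat \<Rightarrow> real" where
  "dew_eta' \<eta> dmax = (if dmax = 0 then \<eta> else min \<eta> (1 / (4 * exp 1 * real dmax)))"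

text \<open>dew_probs eta' K ell d A n s a = p_s^a (probability DEW puts on action a in round s)
  for all rounds s <= n, given the history A; 0 for s > n or s = 0.
  p_{n+1}^a is proportional to exp(-eta' * sum of loss estimates hat ell_s^a over the rounds s
  whose feedback arrived by the end of round n, i.e. s + d_s <= n).\<close>

primrec dew_probs :: "real \<Rightarrow> nat \<Rightarrow> (nat \<Rightarrow> nat \<Rightarrow> real) \<Rightarrow> (nat \<Rightarrow> nat) \<Rightarrow> (nat \<Rightarrow> nat)
    \<Rightarrow> nat \<Rightarrow> nat \<Rightarrow> nat \<Rightarrow> real" where
  "dew_probs eta K ell d A 0 = (\<lambda>s a. 0)"
| "dew_probs eta K ell d A (Suc n) =
     (let P = dew_probs eta K ell d A n;
          L = (\<lambda>a. \<Sum>s\<in>{s\<in>{1..n}. s + d s \<le> n}.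
                   ell s a * (if a = A s then 1 else 0) / P s a);
          W = (\<lambda>a. exp (- eta * L a))
      in (\<lambda>s a. if s \<le> n then P s a
               else if s = Suc n then W a / (\<Sum>b\<in>{1..K}. W b) else 0))"

definition dew_p :: "real \<Rightarrow> nat \<Rightarrow> (nat \<Rightarrow> nat \<Rightarrow> real) \<Rightarrow> (nat \<Rightarrow> nat) \<Rightarrow> (nat \<Rightarrow> nat)
    \<Rightarrow> nat \<Rightarrow> nat \<Rightarrow> real" where
  "dew_p eta K ell d A t a = dew_probs eta K ell d A t t a"

text \<open>Expected cumulative loss of DEW (inputs eta, dmax) over rounds 1..T:
  exact expectation over all action histories in {1..K}^T, each weighted by its probability
  under the algorithm's sequential sampling.\<close>

definition dew_expected_loss :: "nat \<Rightarrow> nat \<Rightarrow> (nat \<Rightarrow> nat \<Rightarrow> real) \<Rightarrow> (nat \<Rightarrow> nat)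
    \<Rightarrow> real \<Rightarrow> nat \<Rightarrow> real" where
  "dew_expected_loss K T ell d \<eta> dmax =
     (\<Sum>A\<in>PiE {1..T} (\<lambda>_. {1..K}).
        (\<Prod>t\<in>{1..T}. dew_p (dew_eta' \<eta> dmax) K ell d A t (A t)) * (\<Sum>t=1..T. ell t (A t)))"

definition dew_regret :: "nat \<Rightarrow> nat \<Rightarrow> (nat \<Rightarrow> nat \<Rightarrow> real) \<Rightarrow> (nat \<Rightarrow> nat)
    \<Rightarrow> real \<Rightarrow> nat \<Rightarrow> real" where
  "dew_regret K T ell d \<eta> dmax =
     dew_expected_loss K T ell d \<eta> dmax - (MIN a\<in>{1..K}. \<Sum>t=1..T. ell t a)"

end

theory Submission
  imports Defs
begin

lemma dew_probs_stable:
  "s \<le> n \<Longrightarrow> dew_probs eta K ell d A n s a = dew_probs eta K ell d A s s a"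
proof (induction n)
  case 0 then show ?case by simp
next
  case (Suc n)
  show ?case
  proof (cases "s \<le> n")
    case True
    then show ?thesis using Suc by (simp add: Let_def)
  next
    case False
    then have "s = Suc n" using Suc.prems by simp
    then show ?thesis by simp
  qed
qed

lemma dew_probs_ell_cong:
  "(\<And>s a. s < n \<Longrightarrow> ell s a = ell' s a) \<Longrightarrow> dew_probs eta K ell d A n = dew_probs eta K ell' d A n"
proof (induction n)
  case 0 then show ?case by simp
next
  case (Suc n)
  have IH: "dew_probs eta K ell d A n = dew_probs eta K ell' d A n" using Suc by auto
  have L: "\<And>a. (\<Sum>s\<in>{s\<in>{1..n}. s + d s \<le> n}. ell s a * (if a = A s then 1 else 0) / dew_probs eta K ell d A n s a)
     = (\<Sum>s\<in>{s\<in>{1..n}. s + d s \<le> n}. ell' s a * (if a = A s then 1 else 0) / dew_probs eta K ell d A n s a)"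
    using Suc.prems by (intro sum.cong) auto
  show ?case apply (unfold dew_probs.simps Let_def) apply (unfold L) apply (unfold IH) by (rule refl)
qed



locale dewl =
  fixes K T :: nat and ell :: "nat \<Rightarrow> nat \<Rightarrow> real" and d :: "nat \<Rightarrow> nat" and \<eta> :: real and dmax :: nat
  assumes K1: "1 \<le> K" and eta_pos: "0 < \<eta>"
    and ell01: "\<And>t a. a \<in> {1..K} \<Longrightarrow> 0 \<le> ell t a \<and> ell t a \<le> 1"
    and ellT: "\<And>t a. T < t \<Longrightarrow> ell t a = 0"
    and dle: "\<And>t. d t \<le> dmax"
    and etad: "4 * exp 1 * \<eta> * dmax \<le> 1"
begin

definition P where "P A n a = dew_p \<eta> K ell d A n a"
definition est where "est A s a = ell s a * (if a = A s then 1 else 0) / P A s a"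
definition Lf where "Lf A n a = (\<Sum>s\<in>{1..T}. if s + d s \<le> n then est A s a else 0)"
definition Xf where "Xf A n a = (\<Sum>s\<in>{1..T}. if s + d s = n then est A s a else 0)"

lemma est_zero: "T < s \<Longrightarrow> est A s a = 0"
  by (simp add: est_def ellT)

lemma Lint: "(\<Sum>s\<in>{s\<in>{1..n}. s + d s \<le> n}. est A s a) = Lf A n a"
proof -
  have "(\<Sum>s\<in>{s\<in>{1..n}. s + d s \<le> n}. est A s a) = (\<Sum>s\<in>{1..n}. if s + d s \<le> n then est A s a else 0)"
    by (rule sum.inter_filter) simp
  also have "\<dots> = (\<Sum>s\<in>{1..max n T}. if s + d s \<le> n then est A s a else 0)"
    by (rule sum.mono_neutral_left) auto
  also have "\<dots> = (\<Sum>s\<in>{1..T}. if s + d s \<le> n then est A s a else 0)"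
    by (rule sum.mono_neutral_right) (auto simp: est_zero)
  finally show ?thesis unfolding Lf_def .
qed

lemma P_Suc: "P A (Suc n) a = exp (- \<eta> * Lf A n a) / (\<Sum>b\<in>{1..K}. exp (- \<eta> * Lf A n b))"
proof -
  have e: "\<And>b. (\<Sum>s\<in>{s\<in>{1..n}. s + d s \<le> n}. ell s b * (if b = A s then 1 else 0) / dew_probs \<eta> K ell d A n s b)
     = Lf A n b"
  proof -
    fix b
    have "(\<Sum>s\<in>{s\<in>{1..n}. s + d s \<le> n}. ell s b * (if b = A s then 1 else 0) / dew_probs \<eta> K ell d A n s b)
      = (\<Sum>s\<in>{s\<in>{1..n}. s + d s \<le> n}. est A s b)"
    proof (rule sum.cong[OF refl])
      fix s assume "s \<in> {s\<in>{1..n}. s + d s \<le> n}"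
      then have "s \<le> n" by simp
      from dew_probs_stable[OF this] show "ell s b * (if b = A s then 1 else 0) / dew_probs \<eta> K ell d A n s b = est A s b"
        by (simp add: est_def P_def dew_p_def)
    qed
    then show "(\<Sum>s\<in>{s\<in>{1..n}. s + d s \<le> n}. ell s b * (if b = A s then 1 else 0) / dew_probs \<eta> K ell d A n s b)
     = Lf A n b" by (simp only: Lint)
  qed
  show ?thesis
    apply (simp only: P_def dew_p_def)
    apply (subst dew_probs.simps(2))
    apply (unfold Let_def e)
    by simp
qed

lemma Lf0: "Lf A 0 a = 0"
  unfolding Lf_def by (intro sum.neutral) auto

lemma P1: "P A (Suc 0) a = 1 / K"
  using K1 by (simp add: P_Suc Lf0)

lemma sumexp_pos: "0 < (\<Sum>b\<in>{1..K}. exp (- \<eta> * Lf A n b))"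
  using K1 by (intro sum_pos) auto

lemma P_pos: "0 < n \<Longrightarrow> 0 < P A n a"
proof -
  assume "0 < n"
  then obtain m where m: "n = Suc m" by (cases n) auto
  show ?thesis unfolding m P_Suc by (intro divide_pos_pos sumexp_pos) simp
qed

lemma P_sum: "0 < n \<Longrightarrow> (\<Sum>a\<in>{1..K}. P A n a) = 1"
proof -
  assume "0 < n"
  then obtain m where m: "n = Suc m" by (cases n) auto
  have "(\<Sum>b\<in>{1..K}. exp (- \<eta> * Lf A m b)) \<noteq> 0" using sumexp_pos[of A m] by linarith
  then show ?thesis unfolding m P_Suc sum_divide_distrib[symmetric] by simp
qed

lemma est_nonneg: "a \<in> {1..K} \<Longrightarrow> 0 < s \<Longrightarrow> 0 \<le> est A s a"
proof -
  assume a: "a \<in> {1..K}" "0 < s"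
  have "0 \<le> ell s a" using ell01[OF a(1)] by simp
  moreover have "0 < P A s a" using P_pos a(2) by simp
  ultimately show ?thesis unfolding est_def by simp
qed

lemma est_nonneg': "a \<in> {1..K} \<Longrightarrow> s \<in> {1..T} \<Longrightarrow> 0 \<le> est A s a"
  using est_nonneg by auto

lemma Xf_nonneg: "a \<in> {1..K} \<Longrightarrow> 0 \<le> Xf A n a"
  unfolding Xf_def by (intro sum_nonneg) (auto intro: est_nonneg')

lemma Lf_Suc_aux: "(if s + d s \<le> Suc n then e else 0) =
     (if s + d s \<le> n then e else 0) + (if s + d s = Suc n then (e::real) else 0)"
  by (auto simp: le_Suc_eq)

lemma Lf_Suc: "Lf A (Suc n) a = Lf A n a + Xf A (Suc n) a"
  unfolding Lf_def Xf_def sum.distrib[symmetric] Lf_Suc_aux[of _ n] ..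

end


context dewl begin

definition Z where "Z A n = (\<Sum>b\<in>{1..K}. P A n b * exp (- \<eta> * Xf A n b))"

lemma exp1_ge2: "2 \<le> exp (1::real)"
  using exp_ge_add_one_self[of 1] by simp

lemma P_step:
  assumes "0 < n"
  shows "P A (Suc n) a = P A n a * exp (- \<eta> * Xf A n a) / Z A n"
proof -
  obtain m where m: "n = Suc m" using assms by (cases n) auto
  define Sn where "Sn = (\<Sum>b\<in>{1..K}. exp (- \<eta> * Lf A n b))"
  define Sm where "Sm = (\<Sum>b\<in>{1..K}. exp (- \<eta> * Lf A m b))"
  have Snp: "0 < Sn" unfolding Sn_def by (rule sumexp_pos)
  have Smp: "0 < Sm" unfolding Sm_def by (rule sumexp_pos)
  have ex: "\<And>b. exp (- \<eta> * Lf A n b) = exp (- \<eta> * Lf A m b) * exp (- \<eta> * Xf A n b)"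
    unfolding m Lf_Suc by (simp add: exp_add[symmetric] algebra_simps)
  have Pn: "\<And>b. P A n b = exp (- \<eta> * Lf A m b) / Sm" unfolding m Sm_def P_Suc ..
  have "Z A n = Sn / Sm"
    unfolding Z_def Sn_def Pn ex sum_divide_distrib by (intro sum.cong) auto
  moreover have "P A (Suc n) a = exp (- \<eta> * Lf A n a) / Sn" unfolding Sn_def P_Suc ..
  ultimately show ?thesis using Snp Smp unfolding Pn ex by (simp add: field_simps)
qed

lemma Z_pos: "0 < n \<Longrightarrow> 0 < Z A n"
  unfolding Z_def using K1 by (intro sum_pos) (auto intro!: mult_pos_pos P_pos)

lemma Z_le1: "0 < n \<Longrightarrow> Z A n \<le> 1"
proof -
  assume n: "0 < n"
  have "Z A n \<le> (\<Sum>b\<in>{1..K}. P A n b)" unfolding Z_def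
  proof (rule sum_mono)
    fix b assume b: "b \<in> {1..K}"
    have "exp (- \<eta> * Xf A n b) \<le> 1" using Xf_nonneg[OF b] eta_pos by simp
    then show "P A n b * exp (- \<eta> * Xf A n b) \<le> P A n b"
      using P_pos[OF n, of A b] by (simp add: mult_left_le)
  qed
  then show ?thesis using P_sum[OF n] by simp
qed

lemma Z_ge: "0 < n \<Longrightarrow> 1 - \<eta> * (\<Sum>b\<in>{1..K}. P A n b * Xf A n b) \<le> Z A n"
proof -
  assume n: "0 < n"
  have "(\<Sum>b\<in>{1..K}. P A n b * (1 - \<eta> * Xf A n b)) \<le> Z A n" unfolding Z_def
  proof (rule sum_mono)
    fix b assume b: "b \<in> {1..K}"
    have "1 - \<eta> * Xf A n b \<le> exp (- \<eta> * Xf A n b)" using exp_ge_add_one_self[of "- \<eta> * Xf A n b"] by simp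
    then show "P A n b * (1 - \<eta> * Xf A n b) \<le> P A n b * exp (- \<eta> * Xf A n b)"
      using P_pos[OF n, of A b] by (simp add: mult_left_mono)
  qed
  moreover have "(\<Sum>b\<in>{1..K}. P A n b * (1 - \<eta> * Xf A n b)) = 1 - \<eta> * (\<Sum>b\<in>{1..K}. P A n b * Xf A n b)"
    using P_sum[OF n] by (simp add: algebra_simps sum.distrib sum_subtractf sum_distrib_left)
  ultimately show ?thesis by simp
qed

lemma P_next_le: "0 < n \<Longrightarrow> a \<in> {1..K} \<Longrightarrow> P A (Suc n) a * Z A n \<le> P A n a"
proof -
  assume n: "0 < n" and a: "a \<in> {1..K}"
  have "exp (- \<eta> * Xf A n a) \<le> 1" using Xf_nonneg[OF a] eta_pos by simp
  then show ?thesis using P_step[OF n] Z_pos[OF n, of A] P_pos[OF n, of A a]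
    by (simp add: mult_left_le)
qed

lemma P_next_ge: "0 < n \<Longrightarrow> a \<in> {1..K} \<Longrightarrow> P A n a - P A (Suc n) a \<le> \<eta> * (P A n a * Xf A n a)"
proof -
  assume n: "0 < n" and a: "a \<in> {1..K}"
  have "P A n a * (1 - \<eta> * Xf A n a) \<le> P A n a * exp (- \<eta> * Xf A n a)"
    using exp_ge_add_one_self[of "- \<eta> * Xf A n a"] P_pos[OF n, of A a] by (simp add: mult_left_mono)
  also have "\<dots> \<le> P A n a * exp (- \<eta> * Xf A n a) / Z A n"
    using Z_pos[OF n, of A] Z_le1[OF n, of A] P_pos[OF n, of A a]
    by (simp add: le_divide_eq mult_left_le)
  also have "\<dots> = P A (Suc n) a" using P_step[OF n] by simp
  finally show ?thesis by (simp add: algebra_simps)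
qed

definition cnt where "cnt n = (\<Sum>j\<in>{1..T}. if j + d j = n then 1 else 0::real)"
definition Nc where "Nc s n = (\<Sum>j\<in>{1..T}. if s \<le> j + d j \<and> j + d j < n then 1 else 0::real)"

lemma Nc_Suc: "s \<le> n \<Longrightarrow> Nc s (Suc n) = Nc s n + cnt n"
  unfolding Nc_def cnt_def sum.distrib[symmetric] by (intro sum.cong) auto

lemma Nc_self: "Nc s s = 0"
  unfolding Nc_def by (intro sum.neutral) auto

lemma Nc_nonneg: "0 \<le> Nc s n" unfolding Nc_def by (intro sum_nonneg) auto
lemma cnt_nonneg: "0 \<le> cnt n" unfolding cnt_def by (intro sum_nonneg) auto

lemma Nc_le: "s \<le> n \<Longrightarrow> Nc s n \<le> real (n + dmax - s)"
proof -
  assume sn: "s \<le> n"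
  have "Nc s n = real (card {j\<in>{1..T}. s \<le> j + d j \<and> j + d j < n})"
    unfolding Nc_def by (simp add: sum.inter_filter[symmetric])
  also have "card {j\<in>{1..T}. s \<le> j + d j \<and> j + d j < n} \<le> card {s - dmax..<n}"
  proof (rule card_mono)
    show "{j\<in>{1..T}. s \<le> j + d j \<and> j + d j < n} \<subseteq> {s - dmax..<n}"
      using dle by (auto simp: le_diff_conv) (metis add_le_mono1 le_trans not_le trans_less_add1 add_mono_thms_linordered_semiring(2) le_less_trans)
  qed simp
  also have "card {s - dmax..<n} \<le> n + dmax - s" using sn by simp
  finally show ?thesis by simp
qed

end


context dewl begin

lemma ed_half: "4 * \<eta> * dmax \<le> 1/2"
proof -
  have "0 \<le> 4 * \<eta> * dmax" using eta_pos by simp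
  then have "4 * \<eta> * dmax * 2 \<le> 4 * \<eta> * dmax * exp 1" using exp1_ge2 by (intro mult_left_mono) auto
  also have "\<dots> \<le> 1" using etad by (simp add: algebra_simps)
  finally show ?thesis by simp
qed

lemma Nc_half: "Nc s n \<le> real (2*dmax) \<Longrightarrow> 2 * \<eta> * Nc s n \<le> 1/2"
proof -
  assume h: "Nc s n \<le> real (2*dmax)"
  have "2*\<eta>*Nc s n \<le> 2*\<eta>*real(2*dmax)" using h eta_pos by (intro mult_left_mono) auto
  also have "\<dots> = 4*\<eta>*dmax" by simp
  finally show ?thesis using ed_half by linarith
qed

lemma est_dot_le:
  assumes j: "1 \<le> j" and q: "\<And>b. b \<in> {1..K} \<Longrightarrow> 0 \<le> q b \<and> q b \<le> 2 * P A j b"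
  shows "(\<Sum>b\<in>{1..K}. q b * est A j b) \<le> 2"
proof -
  have "(\<Sum>b\<in>{1..K}. q b * est A j b) \<le> (\<Sum>b\<in>{1..K}. if b = A j then 2 else 0)"
  proof (rule sum_mono)
    fix b assume b: "b \<in> {1..K}"
    have Pj: "0 < P A j b" using P_pos j by simp
    show "q b * est A j b \<le> (if b = A j then 2 else 0)"
    proof (cases "b = A j")
      case True
      have "q b * est A j b = q b * ell j b / P A j b" using True by (simp add: est_def)
      also have "\<dots> \<le> q b / P A j b"
        using ell01[OF b, of j] q[OF b] Pj by (intro divide_right_mono) (auto simp: mult_left_le)
      also have "\<dots> \<le> 2" using q[OF b] Pj by (simp add: divide_le_eq)
      finally show ?thesis using True by simp
    qed (simp add: est_def)
  qed
  also have "\<dots> \<le> 2" by (simp add: sum.delta)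
  finally show ?thesis .
qed

lemma ratio_aux:
  "\<forall>s a. 1 \<le> s \<longrightarrow> s \<le> n \<longrightarrow> n \<le> s + dmax \<longrightarrow> a \<in> {1..K} \<longrightarrow> P A n a * (1 - 2 * \<eta> * Nc s n) \<le> P A s a"
proof (induction n)
  case 0
  then show ?case by auto
next
  case (Suc n)
  show ?case
  proof (intro allI impI)
    fix s a assume s1: "1 \<le> s" and sn: "s \<le> Suc n" and nd: "Suc n \<le> s + dmax" and a: "a \<in> {1..K}"
    show "P A (Suc n) a * (1 - 2 * \<eta> * Nc s (Suc n)) \<le> P A s a"
    proof (cases "s = Suc n")
      case True
      then show ?thesis by (simp add: Nc_self)
    next
      case False
      then have sn': "s \<le> n" using sn by simp
      then have n0: "0 < n" using s1 by simp
      have rat: "P A n b \<le> 2 * P A j b" if j: "j \<in> {1..T}" "j + d j = n" and b: "b \<in> {1..K}" for j b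
      proof -
        have "j \<le> n" "n \<le> j + dmax" using j dle[of j] by auto
        then have h: "P A n b * (1 - 2 * \<eta> * Nc j n) \<le> P A j b" using Suc.IH j b by auto
        have "Nc j n \<le> real (n + dmax - j)" using Nc_le[OF \<open>j \<le> n\<close>] .
        also have "\<dots> \<le> 2 * dmax"
        proof -
          have "n + dmax - j \<le> 2 * dmax" using j dle[of j] by linarith
          then show ?thesis by (simp only: of_nat_le_iff)
        qed
        finally have "2 * \<eta> * Nc j n \<le> 1/2" by (rule Nc_half)
        then have "P A n b * (1/2) \<le> P A n b * (1 - 2 * \<eta> * Nc j n)"
          using P_pos[OF n0, of A b] by (intro mult_left_mono) auto
        then show ?thesis using h by simp
      qed
      have dot: "(\<Sum>b\<in>{1..K}. P A n b * Xf A n b) \<le> 2 * cnt n"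
      proof -
        have "(\<Sum>b\<in>{1..K}. P A n b * Xf A n b)
            = (\<Sum>j\<in>{1..T}. if j + d j = n then (\<Sum>b\<in>{1..K}. P A n b * est A j b) else 0)"
          unfolding Xf_def sum_distrib_left by (subst sum.swap) (auto intro!: sum.cong)
        also have "\<dots> \<le> (\<Sum>j\<in>{1..T}. if j + d j = n then 2 else 0)"
        proof (rule sum_mono)
          fix j assume j: "j \<in> {1..T}"
          show "(if j + d j = n then (\<Sum>b\<in>{1..K}. P A n b * est A j b) else 0) \<le> (if j + d j = n then 2 else 0)"
          proof (cases "j + d j = n")
            case True
            have "(\<Sum>b\<in>{1..K}. P A n b * est A j b) \<le> 2"
              using j True rat P_pos[OF n0] by (intro est_dot_le) (auto intro: less_imp_le)
            then show ?thesis using True by simp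
          qed simp
        qed
        also have "\<dots> = 2 * cnt n" unfolding cnt_def sum_distrib_left by (intro sum.cong) auto
        finally show ?thesis .
      qed
      define x where "x = 2 * \<eta> * Nc s n"
      define y where "y = 2 * \<eta> * cnt n"
      have x0: "0 \<le> x" unfolding x_def using eta_pos Nc_nonneg by simp
      have y0: "0 \<le> y" unfolding y_def using eta_pos cnt_nonneg by simp
      have xy: "2 * \<eta> * Nc s (Suc n) = x + y" unfolding x_def y_def Nc_Suc[OF sn'] by (simp add: algebra_simps)
      have "Nc s (Suc n) \<le> real (Suc n + dmax - s)" using Nc_le sn by blast
      also have "\<dots> \<le> 2 * dmax"
      proof -
        have "Suc n + dmax - s \<le> 2 * dmax" using nd by linarith
        then show ?thesis by (simp only: of_nat_le_iff)
      qed
      finally have "2 * \<eta> * Nc s (Suc n) \<le> 1/2" by (rule Nc_half)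
      then have "x + y \<le> 1/2" using xy by simp
      have "\<eta> * (\<Sum>b\<in>{1..K}. P A n b * Xf A n b) \<le> \<eta> * (2 * cnt n)"
        using dot eta_pos by (intro mult_left_mono) auto
      then have Zy: "1 - y \<le> Z A n" using Z_ge[OF n0, of A] unfolding y_def by simp
      have IHs: "P A n a * (1 - x) \<le> P A s a" using Suc.IH s1 sn' nd a unfolding x_def by auto
      have Pp: "0 \<le> P A (Suc n) a" using P_pos[of "Suc n" A a] by simp
      have "P A (Suc n) a * (1 - 2 * \<eta> * Nc s (Suc n)) = P A (Suc n) a * (1 - x - y)" using xy by simp
      also have "\<dots> \<le> P A (Suc n) a * ((1 - x) * (1 - y))"
        using Pp x0 y0 by (intro mult_left_mono) (auto simp: algebra_simps)
      also have "\<dots> = (P A (Suc n) a * (1 - x)) * (1 - y)" by (simp add: algebra_simps)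
      also have "\<dots> \<le> (P A (Suc n) a * (1 - x)) * Z A n"
        using Pp \<open>x + y \<le> 1/2\<close> y0 Zy by (intro mult_left_mono) auto
      also have "\<dots> = (P A (Suc n) a * Z A n) * (1 - x)" by (simp add: algebra_simps)
      also have "\<dots> \<le> P A n a * (1 - x)"
        using P_next_le[OF n0 a, of A] \<open>x + y \<le> 1/2\<close> y0 by (intro mult_right_mono) auto
      also have "\<dots> \<le> P A s a" by (rule IHs)
      finally show ?thesis .
    qed
  qed
qed

lemma ratio2:
  assumes "1 \<le> s" "s \<le> n" "n \<le> s + dmax" "a \<in> {1..K}"
  shows "P A n a \<le> 2 * P A s a"
proof -
  have h: "P A n a * (1 - 2 * \<eta> * Nc s n) \<le> P A s a" using ratio_aux assms by blast
  have "Nc s n \<le> real (n + dmax - s)" using Nc_le assms(2) .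
  also have "\<dots> \<le> 2 * dmax"
  proof -
    have "n + dmax - s \<le> 2 * dmax" using assms by linarith
    then show ?thesis by (simp only: of_nat_le_iff)
  qed
  finally have "2 * \<eta> * Nc s n \<le> 1/2" by (rule Nc_half)
  then have "P A n a * (1/2) \<le> P A n a * (1 - 2 * \<eta> * Nc s n)"
    using P_pos[of n A a] assms by (intro mult_left_mono) auto
  then show ?thesis using h by simp
qed

end


context dewl begin

lemma P_dep:
  assumes "\<And>j. 1 \<le> j \<Longrightarrow> j \<le> T \<Longrightarrow> j + d j < n \<Longrightarrow> A j = B j"
  shows "m \<le> n \<Longrightarrow> P A m = P B m"
proof (induction m rule: less_induct)
  case (less m)
  show ?case
  proof (cases m)
    case 0
    then show ?thesis by (simp add: P_def dew_p_def fun_eq_iff)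
  next
    case (Suc m')
    have "Lf A m' a = Lf B m' a" for a
      unfolding Lf_def
    proof (rule sum.cong[OF refl])
      fix s assume s: "s \<in> {1..T}"
      show "(if s + d s \<le> m' then est A s a else 0) = (if s + d s \<le> m' then est B s a else 0)"
      proof (cases "s + d s \<le> m'")
        case True
        have "A s = B s" using assms s True less.prems Suc by auto
        moreover have "P A s = P B s" using less.IH s True less.prems Suc by auto
        ultimately show ?thesis by (simp add: est_def)
      qed simp
    qed
    then show ?thesis unfolding Suc by (simp add: fun_eq_iff P_Suc)
  qed
qed

definition dep :: "nat \<Rightarrow> ((nat \<Rightarrow> nat) \<Rightarrow> real) \<Rightarrow> bool" where "dep m f \<longleftrightarrow> (\<forall>A B. (\<forall>j\<in>{1..m}. A j = B j) \<longrightarrow> f A = f B)"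

definition mu :: "nat \<Rightarrow> (nat \<Rightarrow> nat) \<Rightarrow> real" where "mu m A = (\<Prod>t\<in>{1..m}. P A t (A t))"

definition E :: "nat \<Rightarrow> ((nat \<Rightarrow> nat) \<Rightarrow> real) \<Rightarrow> real" where "E m f = (\<Sum>A\<in>PiE {1..m} (\<lambda>_. {1..K}). mu m A * f A)"

lemma mu_nonneg: "0 \<le> mu m A"
  unfolding mu_def by (intro prod_nonneg) (auto intro!: less_imp_le[OF P_pos])

lemma E_mono: "(\<And>A. A \<in> PiE {1..m} (\<lambda>_. {1..K}) \<Longrightarrow> f A \<le> g A) \<Longrightarrow> E m f \<le> E m g"
  unfolding E_def by (intro sum_mono mult_left_mono mu_nonneg) auto

lemma E_add: "E m (\<lambda>A. f A + g A) = E m f + E m g"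
  unfolding E_def by (simp add: algebra_simps sum.distrib)

lemma E_cmult: "E m (\<lambda>A. c * f A) = c * E m f"
  unfolding E_def by (simp add: algebra_simps sum_distrib_left)

lemma E_sum: "finite I \<Longrightarrow> E m (\<lambda>A. \<Sum>i\<in>I. f i A) = (\<Sum>i\<in>I. E m (f i))"
  unfolding E_def sum_distrib_left by (subst sum.swap) simp

lemma E_cong: "(\<And>A. A \<in> PiE {1..m} (\<lambda>_. {1..K}) \<Longrightarrow> f A = g A) \<Longrightarrow> E m f = E m g"
  unfolding E_def by (intro sum.cong) auto

lemma E_0: "E 0 f = f (\<lambda>_. undefined)"
  unfolding E_def mu_def by simp

lemma E_Suc:
  assumes "dep m f"
  shows "E (Suc m) f = E m f"
proof -
  have ins: "{1..Suc m} = insert (Suc m) {1..m}" by auto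
  have nin: "Suc m \<notin> {1..m}" by simp
  let ?c = "\<lambda>(y::nat, g::nat \<Rightarrow> nat). g(Suc m := y)"
  have "E (Suc m) f = (\<Sum>z\<in>{1..K} \<times> PiE {1..m} (\<lambda>_. {1..K}). mu (Suc m) (?c z) * f (?c z))"
    unfolding E_def ins PiE_insert_eq
    using sum.reindex[OF inj_combinator[OF nin, of "\<lambda>_. {1..K}"]] by simp
  also have "\<dots> = (\<Sum>y\<in>{1..K}. \<Sum>g\<in>PiE {1..m} (\<lambda>_. {1..K}). mu (Suc m) (g(Suc m := y)) * f (g(Suc m := y)))"
    unfolding sum.cartesian_product by (intro sum.cong refl) (auto split: prod.splits)
  also have "\<dots> = (\<Sum>y\<in>{1..K}. \<Sum>g\<in>PiE {1..m} (\<lambda>_. {1..K}). P g (Suc m) y * (mu m g * f g))"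
  proof (intro sum.cong refl)
    fix y g assume g: "g \<in> PiE {1..m} (\<lambda>_. {1..K})"
    have Peq: "P (g(Suc m := y)) t = P g t" if "t \<le> Suc m" for t
      by (rule P_dep[of "Suc m"]) (use that in auto)
    have "mu (Suc m) (g(Suc m := y)) = P g (Suc m) y * (\<Prod>t\<in>{1..m}. P (g(Suc m := y)) t ((g(Suc m := y)) t))"
      unfolding mu_def ins using nin Peq by (simp add: prod.insert)
    also have "(\<Prod>t\<in>{1..m}. P (g(Suc m := y)) t ((g(Suc m := y)) t)) = mu m g"
      unfolding mu_def using Peq by (intro prod.cong) auto
    finally have "mu (Suc m) (g(Suc m := y)) = P g (Suc m) y * mu m g" .
    moreover have "f (g(Suc m := y)) = f g" using assms unfolding dep_def by auto
    ultimately show "mu (Suc m) (g(Suc m := y)) * f (g(Suc m := y)) = P g (Suc m) y * (mu m g * f g)"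
      by simp
  qed
  also have "\<dots> = (\<Sum>g\<in>PiE {1..m} (\<lambda>_. {1..K}). (\<Sum>y\<in>{1..K}. P g (Suc m) y) * (mu m g * f g))"
    by (subst sum.swap) (simp add: sum_distrib_right)
  also have "\<dots> = E m f" unfolding E_def using P_sum[of "Suc m"] by simp
  finally show ?thesis .
qed

lemma dep_mono: assumes "dep m f" "m \<le> k" shows "dep k f"
  unfolding dep_def
proof (intro allI impI)
  fix A B :: "nat \<Rightarrow> nat" assume h: "\<forall>j\<in>{1..k}. A j = B j"
  then have "\<forall>j\<in>{1..m}. A j = B j" using assms(2) by auto
  then show "f A = f B" using assms(1) unfolding dep_def by blast
qed

lemma E_marg: "dep m f \<Longrightarrow> m \<le> k \<Longrightarrow> E k f = E m f"
proof (induction k)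
  case 0 then show ?case by simp
next
  case (Suc k)
  show ?case
  proof (cases "m = Suc k")
    case False
    then have "m \<le> k" using Suc by simp
    then show ?thesis using Suc E_Suc dep_mono by metis
  qed simp
qed

lemma E_const: "E k (\<lambda>_. c) = c"
  using E_marg[of 0 "\<lambda>_. c" k] by (simp add: dep_def E_0)

end


context dewl begin

lemma P_upd:
  assumes "t \<le> s + d s"
  shows "P (A(s:=x)) t = P A t"
  by (rule P_dep[of t]) (use assms in auto)

lemma sumout_m:
  assumes s: "s \<in> {1..m}" and ms: "m \<le> s + d s"
  shows "E m f = E m (\<lambda>A. \<Sum>x\<in>{1..K}. P A s x * f (A(s:=x)))"
proof -
  let ?S = "PiE {1..m} (\<lambda>_. {1..K})"
  define nu where "nu A = (\<Prod>t\<in>{1..m}-{s}. P A t (A t))" for A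
  have musplit: "mu m A = P A s (A s) * nu A" for A
    unfolding mu_def nu_def using s by (simp add: prod.remove)
  have Peq: "P (A(s:=x)) t = P A t" if "t \<le> m" for A x t
    using P_upd[of t s A x] that ms by simp
  have nueq: "nu (A(s:=x)) = nu A" for A x
    unfolding nu_def using Peq by (intro prod.cong) auto
  define g where "g z = (case z of (A, x) \<Rightarrow> mu m A * (P A s x * f (A(s:=x))))" for z
  define g' where "g' z = (case z of (A, x) \<Rightarrow> P A s x * (mu m A * f A))" for z
  define \<phi> where "\<phi> z = (case z of (A, x) \<Rightarrow> (A(s:=x), A s))" for z :: "(nat \<Rightarrow> nat) \<times> nat"
  have "E m (\<lambda>A. \<Sum>x\<in>{1..K}. P A s x * f (A(s:=x))) = (\<Sum>z\<in>?S \<times> {1..K}. g z)"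
    unfolding E_def g_def sum_distrib_left sum.cartesian_product by simp
  also have "\<dots> = (\<Sum>z\<in>?S \<times> {1..K}. g' z)"
  proof -
    have inv: "\<phi> (\<phi> z) = z \<and> \<phi> z \<in> ?S \<times> {1..K}" if z: "z \<in> ?S \<times> {1..K}" for z
    proof -
      obtain A x where zA: "z = (A, x)" by (cases z)
      have A: "A \<in> ?S" and x: "x \<in> {1..K}" using z zA by auto
      have As: "A s \<in> {1..K}" using A s by auto
      have "A(s:=x) \<in> PiE (insert s {1..m}) (\<lambda>_. {1..K})" using PiE_fun_upd[OF x A] by simp
      then have "A(s:=x) \<in> ?S" using insert_absorb[OF s] by simp
      then show ?thesis unfolding \<phi>_def zA using As by simp
    qed
    have geq: "g (\<phi> z) = g' z" if z: "z \<in> ?S \<times> {1..K}" for z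
    proof -
      obtain A x where zA: "z = (A, x)" by (cases z)
      have "g (\<phi> z) = mu m (A(s:=x)) * (P (A(s:=x)) s (A s) * f ((A(s:=x))(s:= A s)))"
        unfolding g_def \<phi>_def zA by simp
      also have "\<dots> = P A s x * nu A * (P A s (A s) * f A)"
        unfolding musplit using Peq[of s A x] s nueq by simp
      also have "\<dots> = g' z" unfolding g'_def zA musplit by simp
      finally show ?thesis .
    qed
    show ?thesis
      by (rule sym, rule sum.reindex_bij_witness[where i = \<phi> and j = \<phi>]) (use inv geq in auto)
  qed
  also have "\<dots> = (\<Sum>A\<in>?S. (\<Sum>x\<in>{1..K}. P A s x) * (mu m A * f A))"
    unfolding g'_def sum_distrib_right sum.cartesian_product by simp
  also have "\<dots> = E m f" unfolding E_def using P_sum[of s] s by simp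
  finally show ?thesis by simp
qed

lemma sumout:
  assumes s: "s \<in> {1..T}" and dp: "dep (min T (s + d s)) f"
  shows "E T f = E T (\<lambda>A. \<Sum>x\<in>{1..K}. P A s x * f (A(s:=x)))"
proof -
  define m where "m = min T (s + d s)"
  have sm: "s \<in> {1..m}" using s unfolding m_def by auto
  have dp2: "dep m (\<lambda>A. \<Sum>x\<in>{1..K}. P A s x * f (A(s:=x)))"
    unfolding dep_def
  proof (intro allI impI)
    fix A B :: "nat \<Rightarrow> nat" assume h: "\<forall>j\<in>{1..m}. A j = B j"
    have "P A s = P B s" by (rule P_dep[of s]) (use h sm in auto)
    moreover have "f (A(s:=x)) = f (B(s:=x))" for x
      using dp h unfolding dep_def m_def[symmetric] by auto
    ultimately show "(\<Sum>x\<in>{1..K}. P A s x * f (A(s:=x))) = (\<Sum>x\<in>{1..K}. P B s x * f (B(s:=x)))"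
      by simp
  qed
  have "E T f = E m f" using E_marg[of m f T] dp unfolding m_def by simp
  also have "\<dots> = E m (\<lambda>A. \<Sum>x\<in>{1..K}. P A s x * f (A(s:=x)))"
    by (rule sumout_m[OF sm]) (simp add: m_def)
  also have "\<dots> = E T (\<lambda>A. \<Sum>x\<in>{1..K}. P A s x * f (A(s:=x)))"
    using E_marg[OF dp2, of T] unfolding m_def by simp
  finally show ?thesis .
qed

lemma est_upd: "est (A(s:=x)) s a = ell s a * (if a = x then 1 else 0) / P A s a"
  unfolding est_def using P_upd[of s s A x] by simp

lemma sum_est:
  assumes a: "a \<in> {1..K}" and s: "1 \<le> s"
  shows "(\<Sum>x\<in>{1..K}. P A s x * (c * est (A(s:=x)) s a)) = c * ell s a"
proof -
  have "(\<Sum>x\<in>{1..K}. P A s x * (c * est (A(s:=x)) s a))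
      = (\<Sum>x\<in>{1..K}. if x = a then P A s a * (c * ell s a / P A s a) else 0)"
    unfolding est_upd by (intro sum.cong) auto
  also have "\<dots> = c * ell s a" using a P_pos[of s A a] s by (simp add: sum.delta')
  finally show ?thesis .
qed

lemma sum_est2:
  assumes a: "a \<in> {1..K}" and s: "1 \<le> s"
  shows "(\<Sum>x\<in>{1..K}. P A s x * (c * (est (A(s:=x)) s a)\<^sup>2)) = c * (ell s a)\<^sup>2 / P A s a"
proof -
  have "(\<Sum>x\<in>{1..K}. P A s x * (c * (est (A(s:=x)) s a)\<^sup>2))
      = (\<Sum>x\<in>{1..K}. if x = a then P A s a * (c * (ell s a / P A s a)\<^sup>2) else 0)"
    unfolding est_upd by (intro sum.cong) auto
  also have "\<dots> = c * (ell s a)\<^sup>2 / P A s a" using a P_pos[of s A a] s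
    by (simp add: sum.delta' power2_eq_square)
  finally show ?thesis .
qed

end


lemma exp_neg_le:
  fixes y :: real assumes y: "0 \<le> y"
  shows "exp (- y) \<le> 1 - y + y\<^sup>2 / 2"
proof -
  obtain t where "exp y = (\<Sum>m<4. y ^ m / fact m) + exp t / fact 4 * y ^ 4"
    using Maclaurin_exp_le[of y 4] by blast
  moreover have "0 \<le> exp t / fact 4 * y ^ 4" by simp
  moreover have "(\<Sum>m<4. y ^ m / fact m) = 1 + y + y\<^sup>2 / 2 + y ^ 3 / 6"
    by (simp add: eval_nat_numeral fact_numeral)
  ultimately have b: "1 + y + y\<^sup>2 / 2 + y ^ 3 / 6 \<le> exp y" by linarith
  have a: "0 < 1 - y + y\<^sup>2 / 2"
  proof -
    have "1 - y + y\<^sup>2 / 2 = (1 - y)\<^sup>2 / 2 + 1/2" by (simp add: power2_eq_square field_simps)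
    moreover have "0 \<le> (1 - y)\<^sup>2 / 2" by simp
    ultimately show ?thesis by linarith
  qed
  have "(1 - y + y\<^sup>2 / 2) * (1 + y + y\<^sup>2 / 2 + y ^ 3 / 6) = 1 + y^3/6 + y^4/12 + y^5/12"
    by (simp add: power2_eq_square eval_nat_numeral algebra_simps)
  moreover have "0 \<le> y^3/6 + y^4/12 + y^5/12" using y by simp
  ultimately have "1 \<le> (1 - y + y\<^sup>2 / 2) * (1 + y + y\<^sup>2 / 2 + y ^ 3 / 6)" by linarith
  also have "\<dots> \<le> (1 - y + y\<^sup>2 / 2) * exp y" using a b by (intro mult_left_mono) auto
  finally have "1 \<le> (1 - y + y\<^sup>2 / 2) * exp y" .
  then show ?thesis by (simp add: exp_minus field_simps)
qed

lemma count_pairs: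
  fixes d :: "nat \<Rightarrow> nat" and T :: nat
  defines "w \<equiv> \<lambda>t s. (if t \<le> s + d s \<and> s + d s < t + d t then 1 else 0)
                    + (if t \<noteq> s \<and> t + d t = s + d s then 1/2 else (0::real))"
  shows "(\<Sum>t\<in>{1..T}. \<Sum>s\<in>{1..T}. w t s) \<le> (\<Sum>t\<in>{1..T}. real (d t))"
proof -
  have wtt: "w t t = 0" for t unfolding w_def by simp
  have "(\<Sum>t\<in>{1..T}. \<Sum>s\<in>{1..T}. w t s)
     = (\<Sum>t\<in>{1..T}. \<Sum>s\<in>{1..T}. (if t < s then w t s else 0) + (if s < t then w t s else 0))"
    by (intro sum.cong refl) (auto simp: wtt)
  also have "\<dots> = (\<Sum>t\<in>{1..T}. \<Sum>s\<in>{1..T}. if t < s then w t s else 0)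
                 + (\<Sum>t\<in>{1..T}. \<Sum>s\<in>{1..T}. if s < t then w t s else 0)"
    by (simp add: sum.distrib)
  also have "(\<Sum>t\<in>{1..T}. \<Sum>s\<in>{1..T}. if s < t then w t s else 0)
           = (\<Sum>t\<in>{1..T}. \<Sum>s\<in>{1..T}. if t < s then w s t else 0)"
    by (rule sum.swap)
  also have "(\<Sum>t\<in>{1..T}. \<Sum>s\<in>{1..T}. if t < s then w t s else 0) + \<dots>
      = (\<Sum>t\<in>{1..T}. \<Sum>s\<in>{1..T}. if t < s then w t s + w s t else 0)"
    by (simp add: sum.distrib[symmetric] if_distrib) (intro sum.cong refl; auto)
  also have "\<dots> \<le> (\<Sum>t\<in>{1..T}. \<Sum>s\<in>{1..T}. if t < s \<and> s \<le> t + d t then 1 else 0)"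
  proof (intro sum_mono)
    fix t s
    show "(if t < s then w t s + w s t else 0) \<le> (if t < s \<and> s \<le> t + d t then 1 else 0)"
    proof (cases "t < s")
      case True
      consider "s + d s < t + d t" | "s + d s = t + d t" | "t + d t < s + d s" by linarith
      then show ?thesis
      proof cases
        case 1 then show ?thesis using True unfolding w_def by auto
      next
        case 2 then show ?thesis using True unfolding w_def by auto
      next
        case 3 then show ?thesis using True unfolding w_def by auto
      qed
    qed simp
  qed
  also have "\<dots> \<le> (\<Sum>t\<in>{1..T}. real (d t))"
  proof (rule sum_mono)
    fix t
    have "(\<Sum>s\<in>{1..T}. if t < s \<and> s \<le> t + d t then 1 else 0::real) = real (card {s\<in>{1..T}. t < s \<and> s \<le> t + d t})"
      by (simp add: sum.inter_filter[symmetric])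
    also have "card {s\<in>{1..T}. t < s \<and> s \<le> t + d t} \<le> card {t<..t + d t}"
      by (rule card_mono) auto
    finally show "(\<Sum>s\<in>{1..T}. if t < s \<and> s \<le> t + d t then 1 else 0::real) \<le> real (d t)" by simp
  qed
  finally show ?thesis .
qed

context dewl begin

definition SW where "SW A n = (\<Sum>b\<in>{1..K}. exp (- \<eta> * Lf A n b))"

lemma SW_pos: "0 < SW A n" unfolding SW_def by (rule sumexp_pos)

lemma Z_SW: "Z A (Suc m) = SW A (Suc m) / SW A m"
proof -
  have "Z A (Suc m) = (\<Sum>b\<in>{1..K}. exp (- \<eta> * Lf A m b) / SW A m * exp (- \<eta> * Xf A (Suc m) b))"
    unfolding Z_def P_Suc SW_def ..
  also have "\<dots> = (\<Sum>b\<in>{1..K}. exp (- \<eta> * Lf A (Suc m) b) / SW A m)"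
    unfolding Lf_Suc by (intro sum.cong refl) (simp add: exp_add[symmetric] algebra_simps)
  also have "\<dots> = SW A (Suc m) / SW A m" unfolding SW_def sum_divide_distrib ..
  finally show ?thesis .
qed

lemma EW_aux:
  "ln (SW A N) - ln K \<le> (\<Sum>n\<in>{1..N}. - \<eta> * (\<Sum>b\<in>{1..K}. P A n b * Xf A n b)
                              + \<eta>\<^sup>2 / 2 * (\<Sum>b\<in>{1..K}. P A n b * (Xf A n b)\<^sup>2))"
proof (induction N)
  case 0
  have "SW A 0 = K" unfolding SW_def Lf0 by simp
  then show ?case by simp
next
  case (Suc N)
  have n0: "0 < Suc N" by simp
  have "ln (SW A (Suc N)) = ln (SW A N) + ln (Z A (Suc N))"
    unfolding Z_SW using SW_pos[of A N] SW_pos[of A "Suc N"] by (simp add: ln_div)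
  moreover have "ln (Z A (Suc N)) \<le> Z A (Suc N) - 1" using Z_pos[OF n0] by (rule ln_le_minus_one)
  moreover have "Z A (Suc N) - 1 \<le> - \<eta> * (\<Sum>b\<in>{1..K}. P A (Suc N) b * Xf A (Suc N) b)
                              + \<eta>\<^sup>2 / 2 * (\<Sum>b\<in>{1..K}. P A (Suc N) b * (Xf A (Suc N) b)\<^sup>2)"
  proof -
    have "Z A (Suc N) - 1 = (\<Sum>b\<in>{1..K}. P A (Suc N) b * (exp (- (\<eta> * Xf A (Suc N) b)) - 1))"
      unfolding Z_def using P_sum[OF n0, of A] by (simp add: algebra_simps sum_subtractf)
    also have "\<dots> \<le> (\<Sum>b\<in>{1..K}. P A (Suc N) b * (- (\<eta> * Xf A (Suc N) b) + (\<eta> * Xf A (Suc N) b)\<^sup>2 / 2))"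
    proof (rule sum_mono)
      fix b assume b: "b \<in> {1..K}"
      have "exp (- (\<eta> * Xf A (Suc N) b)) \<le> 1 - \<eta> * Xf A (Suc N) b + (\<eta> * Xf A (Suc N) b)\<^sup>2 / 2"
        using exp_neg_le[of "\<eta> * Xf A (Suc N) b"] Xf_nonneg[OF b] eta_pos by simp
      then show "P A (Suc N) b * (exp (- (\<eta> * Xf A (Suc N) b)) - 1) \<le> P A (Suc N) b * (- (\<eta> * Xf A (Suc N) b) + (\<eta> * Xf A (Suc N) b)\<^sup>2 / 2)"
        using P_pos[OF n0, of A b] by (intro mult_left_mono) auto
    qed
    also have "\<dots> = - \<eta> * (\<Sum>b\<in>{1..K}. P A (Suc N) b * Xf A (Suc N) b)
                              + \<eta>\<^sup>2 / 2 * (\<Sum>b\<in>{1..K}. P A (Suc N) b * (Xf A (Suc N) b)\<^sup>2)"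
      by (simp only: sum_distrib_left sum.distrib[symmetric]) (intro sum.cong refl, simp add: power2_eq_square algebra_simps)
    finally show ?thesis .
  qed
  ultimately show ?case using Suc.IH by (simp add: sum.cl_ivl_Suc)
qed

lemma EW:
  assumes a: "a \<in> {1..K}"
  shows "(\<Sum>n\<in>{1..N}. (\<Sum>b\<in>{1..K}. P A n b * Xf A n b))
     \<le> Lf A N a + ln K / \<eta> + \<eta> / 2 * (\<Sum>n\<in>{1..N}. (\<Sum>b\<in>{1..K}. P A n b * (Xf A n b)\<^sup>2))"
proof -
  have "exp (- \<eta> * Lf A N a) \<le> SW A N" unfolding SW_def
    using a by (intro member_le_sum) auto
  then have "- \<eta> * Lf A N a \<le> ln (SW A N)" using SW_pos[of A N] by (simp add: ln_ge_iff)
  then have "- \<eta> * Lf A N a - ln K \<le> - \<eta> * (\<Sum>n\<in>{1..N}. (\<Sum>b\<in>{1..K}. P A n b * Xf A n b))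
       + \<eta>\<^sup>2 / 2 * (\<Sum>n\<in>{1..N}. (\<Sum>b\<in>{1..K}. P A n b * (Xf A n b)\<^sup>2))"
    using EW_aux[of A N] by (simp add: sum.distrib sum_distrib_left)
  then have "\<eta> * (\<Sum>n\<in>{1..N}. (\<Sum>b\<in>{1..K}. P A n b * Xf A n b))
     \<le> \<eta> * (Lf A N a + ln K / \<eta> + \<eta> / 2 * (\<Sum>n\<in>{1..N}. (\<Sum>b\<in>{1..K}. P A n b * (Xf A n b)\<^sup>2)))"
    using eta_pos by (simp add: algebra_simps power2_eq_square)
  then show ?thesis using eta_pos by simp
qed

lemma drift_term:
  assumes n0: "0 < n" and b: "b \<in> {1..K}"
  shows "(P A n b - P A (Suc n) b) * ell t b \<le> \<eta> * (P A n b * Xf A n b)"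
proof -
  have h1: "P A n b - P A (Suc n) b \<le> \<eta> * (P A n b * Xf A n b)" by (rule P_next_ge[OF n0 b])
  have h2: "0 \<le> \<eta> * (P A n b * Xf A n b)"
    using eta_pos P_pos[OF n0, of A b] Xf_nonneg[OF b] by simp
  have l: "0 \<le> ell t b" "ell t b \<le> 1" using ell01[OF b] by auto
  have "(P A n b - P A (Suc n) b) * ell t b \<le> \<eta> * (P A n b * Xf A n b) * ell t b"
    using h1 l by (intro mult_right_mono) auto
  also have "\<dots> \<le> \<eta> * (P A n b * Xf A n b)" using h2 l by (simp add: mult_left_le)
  finally show ?thesis .
qed

lemma drift_sum:
  assumes n0: "0 < n"
  shows "(\<Sum>b\<in>{1..K}. (P A n b - P A (Suc n) b) * ell t b) \<le> \<eta> * (\<Sum>b\<in>{1..K}. P A n b * Xf A n b)"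
proof -
  have "(\<Sum>b\<in>{1..K}. (P A n b - P A (Suc n) b) * ell t b) \<le> (\<Sum>b\<in>{1..K}. \<eta> * (P A n b * Xf A n b))"
    by (rule sum_mono) (rule drift_term[OF n0])
  then show ?thesis by (simp add: sum_distrib_left)
qed

lemma drift_pw:
  assumes t: "1 \<le> t"
  shows "(\<Sum>b\<in>{1..K}. (P A t b - P A (t + m) b) * ell t b)
         \<le> \<eta> * (\<Sum>k\<in>{t..<t+m}. \<Sum>b\<in>{1..K}. P A k b * Xf A k b)"
proof (induction m)
  case 0 then show ?case by simp
next
  case (Suc m)
  have n0: "0 < t + m" using t by simp
  have eq: "(\<Sum>b\<in>{1..K}. (P A t b - P A (t + Suc m) b) * ell t b)
     = (\<Sum>b\<in>{1..K}. (P A t b - P A (t + m) b) * ell t b) + (\<Sum>b\<in>{1..K}. (P A (t+m) b - P A (Suc (t + m)) b) * ell t b)"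
    unfolding sum.distrib[symmetric] by (intro sum.cong refl) (simp add: algebra_simps)
  have st: "(\<Sum>b\<in>{1..K}. (P A (t+m) b - P A (Suc (t + m)) b) * ell t b) \<le> \<eta> * (\<Sum>b\<in>{1..K}. P A (t+m) b * Xf A (t+m) b)"
    by (rule drift_sum[OF n0])
  have split: "(\<Sum>k\<in>{t..<t+Suc m}. \<Sum>b\<in>{1..K}. P A k b * Xf A k b)
     = (\<Sum>k\<in>{t..<t+m}. \<Sum>b\<in>{1..K}. P A k b * Xf A k b) + (\<Sum>b\<in>{1..K}. P A (t+m) b * Xf A (t+m) b)"
    unfolding add_Suc_right by (rule sum.atLeastLessThan_Suc) simp
  show ?case unfolding split distrib_left eq using st Suc.IH by linarith
qed

end


context dewl begin

lemma dep_const: "dep m (\<lambda>_. c)" unfolding dep_def by simp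
lemma dep_mult: "dep m f \<Longrightarrow> dep m g \<Longrightarrow> dep m (\<lambda>A. f A * g A)" unfolding dep_def by metis
lemma dep_diff: "dep m f \<Longrightarrow> dep m g \<Longrightarrow> dep m (\<lambda>A. f A - g A)" unfolding dep_def by metis
lemma dep_sum: "(\<And>i. i \<in> I \<Longrightarrow> dep m (f i)) \<Longrightarrow> dep m (\<lambda>A. \<Sum>i\<in>I. f i A)"
  unfolding dep_def by (metis (no_types, lifting) sum.cong)

lemma dep_P: "(\<And>j. 1 \<le> j \<Longrightarrow> j \<le> T \<Longrightarrow> j + d j < n \<Longrightarrow> j \<le> m) \<Longrightarrow> dep m (\<lambda>A. P A n b)"
  unfolding dep_def
proof (intro allI impI)
  fix A B :: "nat \<Rightarrow> nat"
  assume h: "\<And>j. 1 \<le> j \<Longrightarrow> j \<le> T \<Longrightarrow> j + d j < n \<Longrightarrow> j \<le> m" and ab: "\<forall>j\<in>{1..m}. A j = B j"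
  have "P A n = P B n" by (rule P_dep[of n]) (use h ab in auto)
  then show "P A n b = P B n b" by simp
qed

lemma dep_est: "s \<le> m \<or> T < s \<Longrightarrow> dep m (\<lambda>A. est A s b)"
proof (cases "T < s")
  case True
  then show ?thesis using est_zero dep_const[of m 0] by simp
next
  case False
  assume "s \<le> m \<or> T < s"
  then have sm: "s \<le> m" using False by simp
  show ?thesis unfolding dep_def
  proof (intro allI impI)
    fix A B :: "nat \<Rightarrow> nat" assume ab: "\<forall>j\<in>{1..m}. A j = B j"
    have "P A s = P B s" by (rule P_dep[of s]) (use ab sm in auto)
    moreover have "A s = B s \<or> s = 0" using ab sm by auto
    ultimately show "est A s b = est B s b" unfolding est_def by (auto simp: P_def dew_p_def)
  qed
qed

lemma E_est:
  assumes s: "s \<in> {1..T}" and a: "a \<in> {1..K}"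
  shows "E T (\<lambda>A. est A s a) = ell s a"
proof -
  have "E T (\<lambda>A. est A s a) = E T (\<lambda>A. \<Sum>x\<in>{1..K}. P A s x * est (A(s:=x)) s a)"
    by (rule sumout[OF s]) (rule dep_est, use s in auto)
  also have "\<dots> = E T (\<lambda>A. ell s a)"
    using sum_est[OF a, of s _ 1] s by simp
  finally show ?thesis by (simp add: E_const)
qed

lemma E_Pest:
  assumes s: "s \<in> {1..T}"
  shows "E T (\<lambda>A. \<Sum>b\<in>{1..K}. P A (s + d s) b * est A s b) \<le> 1"
proof -
  have "E T (\<lambda>A. \<Sum>b\<in>{1..K}. P A (s + d s) b * est A s b)
      = E T (\<lambda>A. \<Sum>x\<in>{1..K}. P A s x * (\<Sum>b\<in>{1..K}. P (A(s:=x)) (s + d s) b * est (A(s:=x)) s b))"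
    by (rule sumout[OF s]) (intro dep_sum dep_mult dep_P dep_est; use s in auto)
  also have "\<dots> = E T (\<lambda>A. \<Sum>b\<in>{1..K}. P A (s + d s) b * ell s b)"
  proof (rule E_cong)
    fix A :: "nat \<Rightarrow> nat"
    have "(\<Sum>x\<in>{1..K}. P A s x * (\<Sum>b\<in>{1..K}. P (A(s:=x)) (s + d s) b * est (A(s:=x)) s b))
        = (\<Sum>b\<in>{1..K}. \<Sum>x\<in>{1..K}. P A s x * (P A (s + d s) b * est (A(s:=x)) s b))"
      unfolding P_upd[OF le_refl] sum_distrib_left by (rule sum.swap)
    also have "\<dots> = (\<Sum>b\<in>{1..K}. P A (s + d s) b * ell s b)"
      using s by (intro sum.cong refl sum_est) auto
    finally show "(\<Sum>x\<in>{1..K}. P A s x * (\<Sum>b\<in>{1..K}. P (A(s:=x)) (s + d s) b * est (A(s:=x)) s b))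
        = (\<Sum>b\<in>{1..K}. P A (s + d s) b * ell s b)" .
  qed
  also have "\<dots> \<le> E T (\<lambda>A. 1)"
  proof (rule E_mono)
    fix A :: "nat \<Rightarrow> nat"
    have "(\<Sum>b\<in>{1..K}. P A (s + d s) b * ell s b) \<le> (\<Sum>b\<in>{1..K}. P A (s + d s) b)"
      using ell01 P_pos[of "s + d s" A] s by (intro sum_mono) (auto simp: mult_left_le less_imp_le)
    also have "\<dots> = 1" using P_sum[of "s + d s" A] s by simp
    finally show "(\<Sum>b\<in>{1..K}. P A (s + d s) b * ell s b) \<le> 1" .
  qed
  finally show ?thesis by (simp add: E_const)
qed

end


context dewl begin

definition Q where "Q s s' A = (\<Sum>b\<in>{1..K}. P A (s + d s) b * est A s b * est A s' b)"

lemma E_Q_diag: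
  assumes s: "s \<in> {1..T}"
  shows "E T (Q s s) \<le> 2 * K"
proof -
  have "E T (Q s s) = E T (\<lambda>A. \<Sum>x\<in>{1..K}. P A s x * Q s s (A(s:=x)))"
    unfolding Q_def by (rule sumout[OF s]) (intro dep_sum dep_mult dep_P dep_est; use s in auto)
  also have "\<dots> = E T (\<lambda>A. \<Sum>b\<in>{1..K}. P A (s + d s) b * (ell s b)\<^sup>2 / P A s b)"
  proof (rule E_cong)
    fix A :: "nat \<Rightarrow> nat"
    have "(\<Sum>x\<in>{1..K}. P A s x * Q s s (A(s:=x)))
        = (\<Sum>b\<in>{1..K}. \<Sum>x\<in>{1..K}. P A s x * (P A (s + d s) b * (est (A(s:=x)) s b)\<^sup>2))"
      unfolding Q_def P_upd[OF le_refl] sum_distrib_left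
      by (subst sum.swap) (simp add: power2_eq_square algebra_simps)
    also have "\<dots> = (\<Sum>b\<in>{1..K}. P A (s + d s) b * (ell s b)\<^sup>2 / P A s b)"
      using s by (intro sum.cong refl sum_est2) auto
    finally show "(\<Sum>x\<in>{1..K}. P A s x * Q s s (A(s:=x))) = (\<Sum>b\<in>{1..K}. P A (s + d s) b * (ell s b)\<^sup>2 / P A s b)" .
  qed
  also have "\<dots> \<le> E T (\<lambda>A. 2 * K)"
  proof (rule E_mono)
    fix A :: "nat \<Rightarrow> nat"
    have "(\<Sum>b\<in>{1..K}. P A (s + d s) b * (ell s b)\<^sup>2 / P A s b) \<le> (\<Sum>b\<in>{1..K}. 2)"
    proof (rule sum_mono)
      fix b assume b: "b \<in> {1..K}"
      have Ps: "0 < P A s b" using P_pos s by simp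
      have Pn: "0 < P A (s + d s) b" using P_pos s by simp
      have r: "P A (s + d s) b \<le> 2 * P A s b" using s b dle[of s] by (intro ratio2) auto
      have l: "(ell s b)\<^sup>2 \<le> 1" using ell01[OF b, of s] by (simp add: power_le_one)
      have "P A (s + d s) b * (ell s b)\<^sup>2 \<le> P A (s + d s) b" using l Pn by (simp add: mult_left_le)
      also have "\<dots> \<le> 2 * P A s b" by (rule r)
      finally show "P A (s + d s) b * (ell s b)\<^sup>2 / P A s b \<le> 2" using Ps by (simp add: divide_le_eq)
    qed
    then show "(\<Sum>b\<in>{1..K}. P A (s + d s) b * (ell s b)\<^sup>2 / P A s b) \<le> 2 * K" by simp
  qed
  finally show ?thesis by (simp add: E_const)
qed

lemma E_Q_off:
  assumes s: "s \<in> {1..T}" and s': "s' \<in> {1..T}" and ne: "s \<noteq> s'" and eq: "s + d s = s' + d s'"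
  shows "E T (Q s s') \<le> 1"
proof -
  define n where "n = s + d s"
  have "E T (Q s s') = E T (\<lambda>A. \<Sum>x\<in>{1..K}. P A s x * Q s s' (A(s:=x)))"
    unfolding Q_def by (rule sumout[OF s]) (intro dep_sum dep_mult dep_P dep_est; use s s' eq in auto)
  also have "\<dots> = E T (\<lambda>A. \<Sum>b\<in>{1..K}. P A n b * est A s' b * ell s b)"
  proof (rule E_cong)
    fix A :: "nat \<Rightarrow> nat"
    have e': "est (A(s:=x)) s' b = est A s' b" for x b
      unfolding est_def using ne P_upd[of s' s A x] eq by simp
    have "(\<Sum>x\<in>{1..K}. P A s x * Q s s' (A(s:=x)))
        = (\<Sum>b\<in>{1..K}. \<Sum>x\<in>{1..K}. P A s x * ((P A n b * est A s' b) * est (A(s:=x)) s b))"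
      unfolding Q_def P_upd[OF le_refl] sum_distrib_left e' n_def
      by (subst sum.swap) (simp add: algebra_simps)
    also have "\<dots> = (\<Sum>b\<in>{1..K}. P A n b * est A s' b * ell s b)"
      using s by (intro sum.cong refl sum_est) auto
    finally show "(\<Sum>x\<in>{1..K}. P A s x * Q s s' (A(s:=x))) = (\<Sum>b\<in>{1..K}. P A n b * est A s' b * ell s b)" .
  qed
  also have "\<dots> = E T (\<lambda>A. \<Sum>x\<in>{1..K}. P A s' x * (\<Sum>b\<in>{1..K}. P (A(s':=x)) n b * est (A(s':=x)) s' b * ell s b))"
    by (rule sumout[OF s']) (intro dep_sum dep_mult dep_P dep_est dep_const; use s' eq n_def in auto)
  also have "\<dots> = E T (\<lambda>A. \<Sum>b\<in>{1..K}. P A n b * ell s' b * ell s b)"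
  proof (rule E_cong)
    fix A :: "nat \<Rightarrow> nat"
    have Pn: "P (A(s':=x)) n = P A n" for x using P_upd[of n s' A x] eq n_def by simp
    have "(\<Sum>x\<in>{1..K}. P A s' x * (\<Sum>b\<in>{1..K}. P (A(s':=x)) n b * est (A(s':=x)) s' b * ell s b))
        = (\<Sum>b\<in>{1..K}. \<Sum>x\<in>{1..K}. P A s' x * ((P A n b * ell s b) * est (A(s':=x)) s' b))"
      unfolding Pn sum_distrib_left by (subst sum.swap) (simp add: algebra_simps)
    also have "\<dots> = (\<Sum>b\<in>{1..K}. (P A n b * ell s b) * ell s' b)"
      using s' by (intro sum.cong refl sum_est) auto
    also have "\<dots> = (\<Sum>b\<in>{1..K}. P A n b * ell s' b * ell s b)"
      by (simp add: algebra_simps)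
    finally show "(\<Sum>x\<in>{1..K}. P A s' x * (\<Sum>b\<in>{1..K}. P (A(s':=x)) n b * est (A(s':=x)) s' b * ell s b))
        = (\<Sum>b\<in>{1..K}. P A n b * ell s' b * ell s b)" .
  qed
  also have "\<dots> \<le> E T (\<lambda>A. 1)"
  proof (rule E_mono)
    fix A :: "nat \<Rightarrow> nat"
    have n0: "0 < n" using s n_def by simp
    have "(\<Sum>b\<in>{1..K}. P A n b * ell s' b * ell s b) \<le> (\<Sum>b\<in>{1..K}. P A n b)"
    proof (rule sum_mono)
      fix b assume b: "b \<in> {1..K}"
      have "0 \<le> ell s' b * ell s b" "ell s' b * ell s b \<le> 1"
        using ell01[OF b, of s] ell01[OF b, of s'] by (auto intro: mult_le_one)
      then show "P A n b * ell s' b * ell s b \<le> P A n b"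
        using P_pos[OF n0, of A b] by (simp add: mult_left_le mult.assoc)
    qed
    then show "(\<Sum>b\<in>{1..K}. P A n b * ell s' b * ell s b) \<le> 1" using P_sum[OF n0] by simp
  qed
  finally show ?thesis by (simp add: E_const)
qed

lemma E_PX:
  assumes k: "0 < k"
  shows "E T (\<lambda>A. \<Sum>b\<in>{1..K}. P A k b * Xf A k b) \<le> (\<Sum>s\<in>{1..T}. if s + d s = k then 1 else 0)"
proof -
  have "E T (\<lambda>A. \<Sum>b\<in>{1..K}. P A k b * Xf A k b)
      = E T (\<lambda>A. \<Sum>s\<in>{1..T}. if s + d s = k then (\<Sum>b\<in>{1..K}. P A k b * est A s b) else 0)"
    unfolding Xf_def sum_distrib_left by (rule E_cong, subst sum.swap) (auto intro!: sum.cong)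
  also have "\<dots> = (\<Sum>s\<in>{1..T}. E T (\<lambda>A. if s + d s = k then (\<Sum>b\<in>{1..K}. P A k b * est A s b) else 0))"
    by (rule E_sum) simp
  also have "\<dots> \<le> (\<Sum>s\<in>{1..T}. if s + d s = k then 1 else 0)"
  proof (rule sum_mono)
    fix s assume s: "s \<in> {1..T}"
    show "E T (\<lambda>A. if s + d s = k then (\<Sum>b\<in>{1..K}. P A k b * est A s b) else 0) \<le> (if s + d s = k then 1 else 0)"
    proof (cases "s + d s = k")
      case True
      then show ?thesis using E_Pest[OF s] by simp
    qed (simp add: E_const)
  qed
  finally show ?thesis .
qed

lemma E_drift:
  assumes t: "t \<in> {1..T}"
  shows "E T (\<lambda>A. \<Sum>b\<in>{1..K}. (P A t b - P A (t + d t) b) * est A t b)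
     \<le> \<eta> * (\<Sum>k\<in>{t..<t + d t}. \<Sum>s\<in>{1..T}. if s + d s = k then 1 else 0)"
proof -
  have "E T (\<lambda>A. \<Sum>b\<in>{1..K}. (P A t b - P A (t + d t) b) * est A t b)
    = E T (\<lambda>A. \<Sum>x\<in>{1..K}. P A t x * (\<Sum>b\<in>{1..K}. (P (A(t:=x)) t b - P (A(t:=x)) (t + d t) b) * est (A(t:=x)) t b))"
    by (rule sumout[OF t]) (intro dep_sum dep_mult dep_diff dep_P dep_est; use t in auto)
  also have "\<dots> = E T (\<lambda>A. \<Sum>b\<in>{1..K}. (P A t b - P A (t + d t) b) * ell t b)"
  proof (rule E_cong)
    fix A :: "nat \<Rightarrow> nat"
    have "(\<Sum>x\<in>{1..K}. P A t x * (\<Sum>b\<in>{1..K}. (P (A(t:=x)) t b - P (A(t:=x)) (t + d t) b) * est (A(t:=x)) t b))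
       = (\<Sum>b\<in>{1..K}. \<Sum>x\<in>{1..K}. P A t x * ((P A t b - P A (t + d t) b) * est (A(t:=x)) t b))"
      unfolding P_upd[OF le_refl] P_upd[OF le_add1] sum_distrib_left by (rule sum.swap)
    also have "\<dots> = (\<Sum>b\<in>{1..K}. (P A t b - P A (t + d t) b) * ell t b)"
      using t by (intro sum.cong refl sum_est) auto
    finally show "(\<Sum>x\<in>{1..K}. P A t x * (\<Sum>b\<in>{1..K}. (P (A(t:=x)) t b - P (A(t:=x)) (t + d t) b) * est (A(t:=x)) t b))
       = (\<Sum>b\<in>{1..K}. (P A t b - P A (t + d t) b) * ell t b)" .
  qed
  also have "\<dots> \<le> E T (\<lambda>A. \<eta> * (\<Sum>k\<in>{t..<t+d t}. \<Sum>b\<in>{1..K}. P A k b * Xf A k b))"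
    using t by (intro E_mono drift_pw) auto
  also have "\<dots> = \<eta> * (\<Sum>k\<in>{t..<t+d t}. E T (\<lambda>A. \<Sum>b\<in>{1..K}. P A k b * Xf A k b))"
    by (simp add: E_cmult E_sum)
  also have "\<dots> \<le> \<eta> * (\<Sum>k\<in>{t..<t + d t}. \<Sum>s\<in>{1..T}. if s + d s = k then 1 else 0)"
    using t eta_pos by (intro mult_left_mono sum_mono E_PX) auto
  finally show ?thesis .
qed

end


context dewl begin

lemma Xf_sq: "(\<Sum>b\<in>{1..K}. P A n b * (Xf A n b)\<^sup>2)
   = (\<Sum>s\<in>{1..T}. \<Sum>s'\<in>{1..T}. if s + d s = n \<and> s' + d s' = n then Q s s' A else 0)"
proof -
  have "(\<Sum>b\<in>{1..K}. P A n b * (Xf A n b)\<^sup>2)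
     = (\<Sum>b\<in>{1..K}. \<Sum>s\<in>{1..T}. \<Sum>s'\<in>{1..T}. P A n b * ((if s + d s = n then est A s b else 0) * (if s' + d s' = n then est A s' b else 0)))"
  proof -
    have sq: "(Xf A n b)\<^sup>2 = (\<Sum>s\<in>{1..T}. \<Sum>s'\<in>{1..T}. (if s + d s = n then est A s b else 0) * (if s' + d s' = n then est A s' b else 0))" for b
      by (simp only: Xf_def power2_eq_square sum_product)
    show ?thesis unfolding sq sum_distrib_left ..
  qed
  also have "\<dots> = (\<Sum>s\<in>{1..T}. \<Sum>b\<in>{1..K}. \<Sum>s'\<in>{1..T}. P A n b * ((if s + d s = n then est A s b else 0) * (if s' + d s' = n then est A s' b else 0)))"
    by (rule sum.swap)
  also have "\<dots> = (\<Sum>s\<in>{1..T}. \<Sum>s'\<in>{1..T}. \<Sum>b\<in>{1..K}. P A n b * ((if s + d s = n then est A s b else 0) * (if s' + d s' = n then est A s' b else 0)))"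
    by (intro sum.cong refl sum.swap)
  also have "\<dots> = (\<Sum>s\<in>{1..T}. \<Sum>s'\<in>{1..T}. if s + d s = n \<and> s' + d s' = n then Q s s' A else 0)"
    by (intro sum.cong refl) (auto simp: Q_def algebra_simps)
  finally show ?thesis .
qed

lemma V_eq: "(\<Sum>n\<in>{1..T+dmax}. \<Sum>b\<in>{1..K}. P A n b * (Xf A n b)\<^sup>2)
   = (\<Sum>s\<in>{1..T}. \<Sum>s'\<in>{1..T}. if s + d s = s' + d s' then Q s s' A else 0)"
proof -
  have "(\<Sum>n\<in>{1..T+dmax}. \<Sum>b\<in>{1..K}. P A n b * (Xf A n b)\<^sup>2)
     = (\<Sum>n\<in>{1..T+dmax}. \<Sum>s\<in>{1..T}. \<Sum>s'\<in>{1..T}. if s + d s = n \<and> s' + d s' = n then Q s s' A else 0)"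
    unfolding Xf_sq ..
  also have "\<dots> = (\<Sum>s\<in>{1..T}. \<Sum>n\<in>{1..T+dmax}. \<Sum>s'\<in>{1..T}. if s + d s = n \<and> s' + d s' = n then Q s s' A else 0)"
    by (rule sum.swap)
  also have "\<dots> = (\<Sum>s\<in>{1..T}. \<Sum>s'\<in>{1..T}. \<Sum>n\<in>{1..T+dmax}. if s + d s = n \<and> s' + d s' = n then Q s s' A else 0)"
    by (intro sum.cong refl sum.swap)
  also have "\<dots> = (\<Sum>s\<in>{1..T}. \<Sum>s'\<in>{1..T}. if s + d s = s' + d s' then Q s s' A else 0)"
  proof (intro sum.cong refl)
    fix s s' assume s: "s \<in> {1..T}"
    have "s + d s \<in> {1..T+dmax}" using s dle[of s] by auto
    then have "(\<Sum>n\<in>{1..T+dmax}. if s + d s = n \<and> s' + d s' = n then Q s s' A else 0)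
        = (\<Sum>n\<in>{1..T+dmax}. if s + d s = n then (if s' + d s' = s + d s then Q s s' A else 0) else 0)"
      by (intro sum.cong refl) auto
    also have "\<dots> = (if s' + d s' = s + d s then Q s s' A else 0)"
      using \<open>s + d s \<in> {1..T+dmax}\<close> by (simp add: sum.delta)
    finally show "(\<Sum>n\<in>{1..T+dmax}. if s + d s = n \<and> s' + d s' = n then Q s s' A else 0)
        = (if s + d s = s' + d s' then Q s s' A else 0)" by auto
  qed
  finally show ?thesis .
qed

lemma regroup: "(\<Sum>t\<in>{1..T}. \<Sum>b\<in>{1..K}. P A (t + d t) b * est A t b)
   = (\<Sum>n\<in>{1..T+dmax}. \<Sum>b\<in>{1..K}. P A n b * Xf A n b)"
proof -
  have "(\<Sum>n\<in>{1..T+dmax}. \<Sum>b\<in>{1..K}. P A n b * Xf A n b)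
      = (\<Sum>n\<in>{1..T+dmax}. \<Sum>b\<in>{1..K}. \<Sum>s\<in>{1..T}. if s + d s = n then P A n b * est A s b else 0)"
    unfolding Xf_def sum_distrib_left by (intro sum.cong refl) auto
  also have "\<dots> = (\<Sum>n\<in>{1..T+dmax}. \<Sum>s\<in>{1..T}. \<Sum>b\<in>{1..K}. if s + d s = n then P A n b * est A s b else 0)"
    by (intro sum.cong refl sum.swap)
  also have "\<dots> = (\<Sum>s\<in>{1..T}. \<Sum>n\<in>{1..T+dmax}. \<Sum>b\<in>{1..K}. if s + d s = n then P A n b * est A s b else 0)"
    by (rule sum.swap)
  also have "\<dots> = (\<Sum>s\<in>{1..T}. \<Sum>b\<in>{1..K}. P A (s + d s) b * est A s b)"
  proof (rule sum.cong[OF refl])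
    fix s assume s: "s \<in> {1..T}"
    have "s + d s \<in> {1..T+dmax}" using s dle[of s] by auto
    have "(\<Sum>n\<in>{1..T+dmax}. \<Sum>b\<in>{1..K}. if s + d s = n then P A n b * est A s b else 0)
       = (\<Sum>n\<in>{1..T+dmax}. if s + d s = n then (\<Sum>b\<in>{1..K}. P A (s + d s) b * est A s b) else 0)"
      by (intro sum.cong refl) auto
    also have "\<dots> = (\<Sum>b\<in>{1..K}. P A (s + d s) b * est A s b)"
      using \<open>s + d s \<in> {1..T+dmax}\<close> by (simp add: sum.delta)
    finally show "(\<Sum>n\<in>{1..T+dmax}. \<Sum>b\<in>{1..K}. if s + d s = n then P A n b * est A s b else 0)
       = (\<Sum>b\<in>{1..K}. P A (s + d s) b * est A s b)" .
  qed
  finally show ?thesis by simp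
qed

lemma Lf_N: "Lf A (T + dmax) a = (\<Sum>s\<in>{1..T}. est A s a)"
  unfolding Lf_def using dle by (intro sum.cong refl) (auto simp: add_mono)

lemma loss_eq:
  assumes A: "A \<in> PiE {1..T} (\<lambda>_. {1..K})"
  shows "(\<Sum>t\<in>{1..T}. ell t (A t)) = (\<Sum>t\<in>{1..T}. \<Sum>b\<in>{1..K}. P A t b * est A t b)"
proof (intro sum.cong refl)
  fix t assume t: "t \<in> {1..T}"
  have At: "A t \<in> {1..K}" using A t by auto
  have "(\<Sum>b\<in>{1..K}. P A t b * est A t b) = (\<Sum>b\<in>{1..K}. if b = A t then ell t b else 0)"
  proof (rule sum.cong[OF refl])
    fix b
    have "0 < P A t b" using P_pos[of t A b] t by simp
    then show "P A t b * est A t b = (if b = A t then ell t b else 0)" unfolding est_def by simp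
  qed
  also have "\<dots> = ell t (A t)" using At by (simp add: sum.delta)
  finally show "ell t (A t) = (\<Sum>b\<in>{1..K}. P A t b * est A t b)" by simp
qed

end


context dewl begin

lemma E_V:
  "E T (\<lambda>A. \<Sum>s\<in>{1..T}. \<Sum>s'\<in>{1..T}. if s + d s = s' + d s' then Q s s' A else 0)
   \<le> 2 * real K * real T + (\<Sum>s\<in>{1..T}. \<Sum>s'\<in>{1..T}. if s \<noteq> s' \<and> s + d s = s' + d s' then 1 else (0::real))"
proof -
  have "E T (\<lambda>A. \<Sum>s\<in>{1..T}. \<Sum>s'\<in>{1..T}. if s + d s = s' + d s' then Q s s' A else 0)
     = (\<Sum>s\<in>{1..T}. \<Sum>s'\<in>{1..T}. E T (\<lambda>A. if s + d s = s' + d s' then Q s s' A else 0))"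
    by (simp add: E_sum)
  also have "\<dots> \<le> (\<Sum>s\<in>{1..T}. \<Sum>s'\<in>{1..T}. (if s = s' then 2 * real K else 0) + (if s \<noteq> s' \<and> s + d s = s' + d s' then 1 else (0::real)))"
  proof (intro sum_mono)
    fix s s' assume s: "s \<in> {1..T}" and s': "s' \<in> {1..T}"
    show "E T (\<lambda>A. if s + d s = s' + d s' then Q s s' A else 0)
        \<le> (if s = s' then 2 * real K else 0) + (if s \<noteq> s' \<and> s + d s = s' + d s' then 1 else (0::real))"
    proof (cases "s + d s = s' + d s'")
      case True
      show ?thesis
      proof (cases "s = s'")
        case True
        then show ?thesis using E_Q_diag[OF s] by simp
      next
        case False
        then show ?thesis using E_Q_off[OF s s' False] \<open>s + d s = s' + d s'\<close> by simp
      qed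
    next
      case False
      then show ?thesis by (simp add: E_const)
    qed
  qed
  also have "\<dots> = 2 * real K * real T + (\<Sum>s\<in>{1..T}. \<Sum>s'\<in>{1..T}. if s \<noteq> s' \<and> s + d s = s' + d s' then 1 else (0::real))"
    by (simp add: sum.distrib sum.delta)
  finally show ?thesis .
qed

lemma C1_eq: "(\<Sum>t\<in>{1..T}. \<Sum>k\<in>{t..<t + d t}. \<Sum>s\<in>{1..T}. if s + d s = k then 1 else 0::real)
  = (\<Sum>t\<in>{1..T}. \<Sum>s\<in>{1..T}. if t \<le> s + d s \<and> s + d s < t + d t then 1 else 0)"
proof (rule sum.cong[OF refl])
  fix t
  have "(\<Sum>k\<in>{t..<t + d t}. \<Sum>s\<in>{1..T}. if s + d s = k then 1 else 0::real)
      = (\<Sum>s\<in>{1..T}. \<Sum>k\<in>{t..<t + d t}. if s + d s = k then 1 else 0)" by (rule sum.swap)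
  also have "\<dots> = (\<Sum>s\<in>{1..T}. if t \<le> s + d s \<and> s + d s < t + d t then 1 else 0)"
    by (intro sum.cong refl) (simp add: sum.delta)
  finally show "(\<Sum>k\<in>{t..<t + d t}. \<Sum>s\<in>{1..T}. if s + d s = k then 1 else 0::real)
      = (\<Sum>s\<in>{1..T}. if t \<le> s + d s \<and> s + d s < t + d t then 1 else 0)" .
qed

theorem locale_main:
  assumes a: "a \<in> {1..K}"
  shows "E T (\<lambda>A. \<Sum>t\<in>{1..T}. ell t (A t))
     \<le> (\<Sum>t\<in>{1..T}. ell t a) + ln K / \<eta> + \<eta> * (K * T + (\<Sum>t\<in>{1..T}. real (d t)))"
proof -
  define V where "V A = (\<Sum>s\<in>{1..T}. \<Sum>s'\<in>{1..T}. if s + d s = s' + d s' then Q s s' A else 0)" for A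
  define Dr where "Dr t A = (\<Sum>b\<in>{1..K}. (P A t b - P A (t + d t) b) * est A t b)" for t A
  define C1 where "C1 = (\<Sum>t\<in>{1..T}. \<Sum>s\<in>{1..T}. if t \<le> s + d s \<and> s + d s < t + d t then 1 else 0::real)"
  define C2 where "C2 = (\<Sum>s\<in>{1..T}. \<Sum>s'\<in>{1..T}. if s \<noteq> s' \<and> s + d s = s' + d s' then 1 else 0::real)"
  have pw: "(\<Sum>t\<in>{1..T}. ell t (A t))
      \<le> (\<Sum>s\<in>{1..T}. est A s a) + ln K / \<eta> + \<eta> / 2 * V A + (\<Sum>t\<in>{1..T}. Dr t A)"
    if A: "A \<in> PiE {1..T} (\<lambda>_. {1..K})" for A
  proof -
    have e1: "(\<Sum>t\<in>{1..T}. ell t (A t)) = (\<Sum>t\<in>{1..T}. \<Sum>b\<in>{1..K}. P A t b * est A t b)"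
      by (rule loss_eq[OF A])
    have e2: "(\<Sum>t\<in>{1..T}. \<Sum>b\<in>{1..K}. P A t b * est A t b) = (\<Sum>t\<in>{1..T}. \<Sum>b\<in>{1..K}. P A (t + d t) b * est A t b) + (\<Sum>t\<in>{1..T}. Dr t A)"
      unfolding Dr_def sum.distrib[symmetric] by (intro sum.cong refl) (simp add: algebra_simps)
    have e3: "(\<Sum>t\<in>{1..T}. \<Sum>b\<in>{1..K}. P A (t + d t) b * est A t b)
        = (\<Sum>n\<in>{1..T+dmax}. \<Sum>b\<in>{1..K}. P A n b * Xf A n b)" by (rule regroup)
    have e4: "(\<Sum>n\<in>{1..T+dmax}. \<Sum>b\<in>{1..K}. P A n b * Xf A n b) \<le> Lf A (T+dmax) a + ln K / \<eta> + \<eta> / 2 * (\<Sum>n\<in>{1..T+dmax}. \<Sum>b\<in>{1..K}. P A n b * (Xf A n b)\<^sup>2)"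
      by (rule EW[OF a])
    have e5: "Lf A (T+dmax) a + ln K / \<eta> + \<eta> / 2 * (\<Sum>n\<in>{1..T+dmax}. \<Sum>b\<in>{1..K}. P A n b * (Xf A n b)\<^sup>2)
       = (\<Sum>s\<in>{1..T}. est A s a) + ln K / \<eta> + \<eta> / 2 * V A"
      unfolding Lf_N V_eq V_def ..
    show ?thesis using e1 e2 e3 e4 e5 by linarith
  qed
  have "E T (\<lambda>A. \<Sum>t\<in>{1..T}. ell t (A t))
     \<le> E T (\<lambda>A. (\<Sum>s\<in>{1..T}. est A s a) + ln K / \<eta> + \<eta> / 2 * V A + (\<Sum>t\<in>{1..T}. Dr t A))"
    by (rule E_mono) (rule pw)
  also have "\<dots> = (\<Sum>s\<in>{1..T}. E T (\<lambda>A. est A s a)) + ln K / \<eta> + \<eta> / 2 * E T V + (\<Sum>t\<in>{1..T}. E T (Dr t))"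
    by (simp only: E_add E_cmult E_sum finite_atLeastAtMost E_const)
  also have "(\<Sum>s\<in>{1..T}. E T (\<lambda>A. est A s a)) = (\<Sum>s\<in>{1..T}. ell s a)"
    using a by (intro sum.cong refl E_est) auto
  also have "E T V \<le> 2 * real K * real T + C2" unfolding V_def C2_def by (rule E_V)
  also have "(\<Sum>t\<in>{1..T}. E T (Dr t)) \<le> (\<Sum>t\<in>{1..T}. \<eta> * (\<Sum>k\<in>{t..<t + d t}. \<Sum>s\<in>{1..T}. if s + d s = k then 1 else 0))"
    unfolding Dr_def by (intro sum_mono E_drift)
  also have "\<dots> = \<eta> * C1" unfolding C1_def sum_distrib_left[symmetric] C1_eq ..
  finally have main: "E T (\<lambda>A. \<Sum>t\<in>{1..T}. ell t (A t))
     \<le> (\<Sum>s\<in>{1..T}. ell s a) + ln K / \<eta> + \<eta> * (K * T + (C1 + C2 / 2))"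
    using eta_pos by (simp add: algebra_simps mult_left_mono)
  have "C1 + C2 / 2 \<le> (\<Sum>t\<in>{1..T}. real (d t))"
  proof -
    have "C1 + C2 / 2 = (\<Sum>t\<in>{1..T}. \<Sum>s\<in>{1..T}. (if t \<le> s + d s \<and> s + d s < t + d t then 1 else 0)
                    + (if t \<noteq> s \<and> t + d t = s + d s then 1/2 else (0::real)))"
      unfolding C1_def C2_def sum_divide_distrib sum.distrib[symmetric] by (intro sum.cong refl) auto
    also have "\<dots> \<le> (\<Sum>t\<in>{1..T}. real (d t))" by (rule count_pairs)
    finally show ?thesis .
  qed
  then have "\<eta> * (K * T + (C1 + C2 / 2)) \<le> \<eta> * (K * T + (\<Sum>t\<in>{1..T}. real (d t)))"
    using eta_pos by (intro mult_left_mono) auto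
  then show ?thesis using main by linarith
qed

end


theorem theorem1:
  fixes K T dmax :: nat and ell :: "nat \<Rightarrow> nat \<Rightarrow> real" and d :: "nat \<Rightarrow> nat" and \<eta> :: real
  assumes "K \<ge> 2" and "T \<ge> 1"
    and "\<forall>t. \<forall>a\<in>{1..K}. 0 \<le> ell t a \<and> ell t a \<le> 1"
    and "\<forall>t. d t \<le> dmax"
    and "\<eta> > 0"
  shows "(dew_regret K T ell d \<eta> dmax
           \<le> max (ln (real K) / \<eta>) (4 * exp 1 * real dmax * ln (real K))
             + \<eta> * (real K * real T * exp 1 / 2 + real (\<Sum>t=1..T. d t)))
         \<and> (\<eta> = sqrt (ln (real K) / (real K * real T * exp 1 / 2 + real (\<Sum>t=1..T. d t)))
         \<and> \<eta> * (4 * exp 1 * real dmax) \<le> 1 \<longrightarrow>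
         dew_regret K T ell d \<eta> dmax
           \<le> 2 * sqrt ((real K * real T * exp 1 / 2 + real (\<Sum>t=1..T. d t)) * ln (real K)))"
proof -
  note K2 = assms(1) and ellb = assms(3) and dl = assms(4) and ep = assms(5)
  define \<eta>' where "\<eta>' = dew_eta' \<eta> dmax"
  define ell' where "ell' t a = (if t \<le> T then ell t a else 0)" for t a
  define D where "D = real (\<Sum>t=1..T. d t)"
  have e2: "2 \<le> exp (1::real)" using exp_ge_add_one_self[of 1] by simp
  have ep': "0 < \<eta>'" unfolding \<eta>'_def dew_eta'_def using ep by auto
  have ee: "\<eta>' \<le> \<eta>" unfolding \<eta>'_def dew_eta'_def by auto
  have etad': "4 * exp 1 * \<eta>' * dmax \<le> 1"
  proof (cases "dmax = 0")
    case False
    then have pos: "0 < 4 * exp 1 * real dmax" by simp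
    have "\<eta>' \<le> 1 / (4 * exp 1 * real dmax)" unfolding \<eta>'_def dew_eta'_def using False by simp
    then have "\<eta>' * (4 * exp 1 * real dmax) \<le> 1" using pos by (simp add: le_divide_eq)
    then show ?thesis by (simp add: algebra_simps)
  qed simp
  interpret L: dewl K T ell' d \<eta>' dmax
    by unfold_locales (use K2 ep' ellb dl etad' in \<open>auto simp: ell'_def\<close>)
  have Peq: "dew_p \<eta>' K ell d A t = L.P A t" if "t \<le> T" for A t
    unfolding L.P_def dew_p_def using dew_probs_ell_cong[of t ell ell'] that by (simp add: ell'_def)
  have loss: "dew_expected_loss K T ell d \<eta> dmax = L.E T (\<lambda>A. \<Sum>t\<in>{1..T}. ell' t (A t))"
    unfolding dew_expected_loss_def L.E_def L.mu_def \<eta>'_def[symmetric]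
    by (intro sum.cong refl arg_cong2[where f = "(*)"] prod.cong) (auto simp: Peq ell'_def)
  have minq: "(MIN a\<in>{1..K}. \<Sum>t=1..T. ell t a) = (MIN a\<in>{1..K}. \<Sum>t=1..T. ell' t a)"
    by (intro arg_cong[where f = Min] image_cong refl sum.cong) (auto simp: ell'_def)
  obtain a where a: "a \<in> {1..K}" and amin: "(MIN a\<in>{1..K}. \<Sum>t=1..T. ell' t a) = (\<Sum>t=1..T. ell' t a)"
  proof -
    have "(MIN a\<in>{1..K}. \<Sum>t=1..T. ell' t a) \<in> (\<lambda>a. \<Sum>t=1..T. ell' t a) ` {1..K}"
      using K2 by (intro Min_in) auto
    then show ?thesis using that by auto
  qed
  have reg: "dew_regret K T ell d \<eta> dmax \<le> ln K / \<eta>' + \<eta>' * (K * T + D)"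
    using L.locale_main[OF a] unfolding dew_regret_def loss minq amin D_def by simp
  have D0: "0 \<le> D" unfolding D_def by (rule of_nat_0_le_iff)
  have lnK: "0 < ln (real K)" using K2 by simp
  have part1_aux: "ln K / \<eta>' \<le> max (ln (real K) / \<eta>) (4 * exp 1 * real dmax * ln (real K))"
  proof (cases "dmax = 0 \<or> \<eta> \<le> 1 / (4 * exp 1 * real dmax)")
    case True
    then have "\<eta>' = \<eta>" unfolding \<eta>'_def dew_eta'_def by auto
    then show ?thesis by simp
  next
    case False
    then have "\<eta>' = 1 / (4 * exp 1 * real dmax)" unfolding \<eta>'_def dew_eta'_def by auto
    then have "ln K / \<eta>' = 4 * exp 1 * real dmax * ln (real K)" by simp
    then show ?thesis by simp
  qed
  have "\<eta>' * (K * T + D) \<le> \<eta> * (K * T + D)" using ee D0 by (intro mult_right_mono) auto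
  also have "\<dots> \<le> \<eta> * (real K * real T * exp 1 / 2 + D)"
  proof -
    have "real K * real T * 1 \<le> real K * real T * (exp 1 / 2)" using e2 by (intro mult_left_mono) auto
    then show ?thesis using ep by (intro mult_left_mono) auto
  qed
  finally have part1: "dew_regret K T ell d \<eta> dmax
           \<le> max (ln (real K) / \<eta>) (4 * exp 1 * real dmax * ln (real K))
             + \<eta> * (real K * real T * exp 1 / 2 + D)"
    using reg part1_aux by linarith
  have part2: "dew_regret K T ell d \<eta> dmax
           \<le> 2 * sqrt ((real K * real T * exp 1 / 2 + D) * ln (real K))"
    if h: "\<eta> = sqrt (ln (real K) / (real K * real T * exp 1 / 2 + D))" "\<eta> * (4 * exp 1 * real dmax) \<le> 1"
  proof -
    define X where "X = real K * real T * exp 1 / 2 + D"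
    have X0: "0 < X" unfolding X_def using K2 assms(2) D0 by (simp add: add_pos_nonneg)
    have mx: "max (ln (real K) / \<eta>) (4 * exp 1 * real dmax * ln (real K)) = ln K / \<eta>"
    proof -
      have "4 * exp 1 * real dmax \<le> 1 / \<eta>" using h(2) ep by (simp add: le_divide_eq algebra_simps)
      then have "4 * exp 1 * real dmax * ln (real K) \<le> (1 / \<eta>) * ln (real K)"
        using lnK by (intro mult_right_mono) auto
      then show ?thesis by simp
    qed
    have eta2: "\<eta>\<^sup>2 = ln K / X" unfolding h(1) X_def using lnK X0 X_def by simp
    have Lx: "ln K = X * \<eta>\<^sup>2" using eta2 X0 by simp
    have "ln K / \<eta> = X * \<eta>" using Lx ep by (simp add: power2_eq_square)
    moreover have "sqrt (X * ln K) = X * \<eta>"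
      unfolding Lx using X0 ep by (simp add: real_sqrt_mult power2_eq_square)
    ultimately have "ln K / \<eta> + \<eta> * X = 2 * sqrt (X * ln K)" by (simp add: algebra_simps)
    then show ?thesis using part1 mx unfolding X_def by simp
  qed
  show ?thesis using part1 part2 unfolding D_def by blast
qed


end
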